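(* Let $n\geq 14$ and let $S$ be a Steiner quadruple system S$(3,4,n)$ on the point set $\mathbb{Z}_n$, and let $A,B$ be a partition of $\mathbb{Z}_n$ into subsets of sizes $3$ and $n-3$, respectively. If there exists a perpendicular array PA$_\lambda(4,n-3,n-3)$, then there exists a large set with multiplicity LS$(3,4,n;\mu)$, where $\mu=\lambda\binom{n-4}{3}\big/4$.
   Context: A Steiner system S$(t,k,n)$ is a pair $(Q,B)$ where $Q$ is an $n$-set and $B$ is a collection of $k$-subsets (blocks) of $Q$ such that every $t$-subset of $Q$ is contained in exactly one block. A large set with multiplicity $\mu$, LS$(t,k,n;\mu)$, is a family (the same system may occur more than once) of Steiner systems S$(t,k,n)$ on a common $n$-set $Q$ such that every $k$-subset of $Q$ is a block of exactly $\mu$ of the systems. A perpendicular array PA$_\lambda(k,\ell,m)$ is a $\lambda\binom{m}{k}\times \ell$ matrix with entries from an $m$-set such that each row has $\ell$ distinct entries and, in the submatrix formed by any $k$ columns, each $k$-subset of the $m$-set occurs (as the set of entries of a row) exactly $\lambda$ times. *)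

theory Defs
  imports Main
begin

definition steiner_system :: "nat \<Rightarrow> nat \<Rightarrow> 'a set \<Rightarrow> 'a set set \<Rightarrow> bool" where
  "steiner_system t k Q Bl \<longleftrightarrow>
     (\<forall>K\<in>Bl. K \<subseteq> Q \<and> card K = k) \<and>
     (\<forall>T. T \<subseteq> Q \<and> card T = t \<longrightarrow> (\<exists>!K. K \<in> Bl \<and> T \<subseteq> K))"

definition large_set :: "nat \<Rightarrow> nat \<Rightarrow> 'a set \<Rightarrow> nat \<Rightarrow> 'a set set list \<Rightarrow> bool" where
  "large_set t k Q mu Ls \<longleftrightarrow>
     (\<forall>D\<in>set Ls. steiner_system t k Q D) \<and>
     (\<forall>K. K \<subseteq> Q \<and> card K = k \<longrightarrow> length (filter (\<lambda>D. K \<in> D) Ls) = mu)"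

definition perp_array :: "nat \<Rightarrow> nat \<Rightarrow> nat \<Rightarrow> nat \<Rightarrow> nat list list \<Rightarrow> bool" where
  "perp_array lam k l m M \<longleftrightarrow>
     length M = lam * (m choose k) \<and>
     (\<forall>r\<in>set M. length r = l \<and> distinct r \<and> set r \<subseteq> {0..<m}) \<and>
     (\<forall>C K. C \<subseteq> {0..<l} \<and> card C = k \<and> K \<subseteq> {0..<m} \<and> card K = k \<longrightarrow>
        length (filter (\<lambda>r. (\<lambda>c. r ! c) ` C = K) M) = lam)"

end

theory Submission
  imports Defs
begin


lemma sum_filter_swap:
  assumes "finite I"
  shows "(\<Sum>a\<in>I. length (filter (P a) xs)) = sum_list (map (\<lambda>x. card {a\<in>I. P a x}) xs)"
proof (induction xs)
  case Nil then show ?case by simp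
next
  case (Cons x xs)
  have "(\<Sum>a\<in>I. length (filter (P a) (x#xs))) = (\<Sum>a\<in>I. (if P a x then 1 else 0) + length (filter (P a) xs))"
    by (rule sum.cong) auto
  also have "\<dots> = (\<Sum>a\<in>I. (if P a x then 1 else 0)) + (\<Sum>a\<in>I. length (filter (P a) xs))"
    by (rule sum.distrib)
  also have "(\<Sum>a\<in>I. (if P a x then 1 else 0::nat)) = card {a\<in>I. P a x}"
    using assms by (simp add: sum.inter_filter[symmetric])
  finally show ?case using Cons by simp
qed

lemma sum_list_if_const:
  "sum_list (map (\<lambda>x. if P x then (c::nat) else 0) xs) = c * length (filter P xs)"
  by (induction xs) auto

lemma sum_list_const_nat: "sum_list (map (\<lambda>x. (c::nat)) xs) = c * length xs"
  by (induction xs) auto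

lemma filter_split_len:
  "length (filter P xs) = length (filter (\<lambda>x. P x \<and> Q x) xs) + length (filter (\<lambda>x. P x \<and> \<not> Q x) xs)"
  by (induction xs) auto

lemma preimage_bij:
  assumes "bij_betw f U U" "Z \<subseteq> U"
  shows "{X'. X' \<subseteq> U \<and> P X' \<and> f ` X' = Z} = (if P (inv_into U f ` Z) then {inv_into U f ` Z} else {})"
proof -
  have inj: "inj_on f U" and im: "f ` U = U" using assms(1) by (auto simp: bij_betw_def)
  have a: "inv_into U f ` Z \<subseteq> U"
  proof
    fix y assume "y \<in> inv_into U f ` Z"
    then obtain z where z: "z \<in> Z" "y = inv_into U f z" by blast
    then have "z \<in> f ` U" using assms(2) im by blast
    then show "y \<in> U" using z(2) by (simp add: inv_into_into)
  qed
  have b: "f ` (inv_into U f ` Z) = Z" using assms by (simp add: bij_betw_def image_inv_into_cancel)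
  have c: "X' = inv_into U f ` Z" if "X' \<subseteq> U" "f ` X' = Z" for X'
    using that inj inv_into_image_cancel by metis
  define W where "W = inv_into U f ` Z"
  have "{X'. X' \<subseteq> U \<and> P X' \<and> f ` X' = Z} = (if P W then {W} else {})"
  proof (cases "P W")
    case True
    have "{X'. X' \<subseteq> U \<and> P X' \<and> f ` X' = Z} = {W}"
    proof
      show "{X'. X' \<subseteq> U \<and> P X' \<and> f ` X' = Z} \<subseteq> {W}"
      proof
        fix X' assume "X' \<in> {X'. X' \<subseteq> U \<and> P X' \<and> f ` X' = Z}"
        then have "X' \<subseteq> U" "f ` X' = Z" by auto
        then show "X' \<in> {W}" using c W_def by simp
      qed
      show "{W} \<subseteq> {X'. X' \<subseteq> U \<and> P X' \<and> f ` X' = Z}" using a b True unfolding W_def by simp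
    qed
    then show ?thesis using True by simp
  next
    case False
    have "{X'. X' \<subseteq> U \<and> P X' \<and> f ` X' = Z} = {}"
    proof (rule ccontr)
      assume "{X'. X' \<subseteq> U \<and> P X' \<and> f ` X' = Z} \<noteq> {}"
      then obtain X' where "X' \<subseteq> U" "P X'" "f ` X' = Z" by auto
      then show False using c False W_def by simp
    qed
    then show ?thesis using False by simp
  qed
  then show ?thesis unfolding W_def .
qed

context
  fixes U :: "'a set" and fs :: "('a \<Rightarrow> 'a) list" and lam :: nat and X :: "'a set" and t :: nat
  assumes finU: "finite U" and bij: "\<forall>f\<in>set fs. bij_betw f U U"
    and H4: "\<forall>X Y. X \<subseteq> U \<and> Y \<subseteq> U \<and> card X = 4 \<and> card Y = 4 \<longrightarrow> length (filter (\<lambda>f. f ` X = Y) fs) = lam"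
    and XU: "X \<subseteq> U" and cX: "card X = t" and t4: "t \<le> 4"
begin

lemma cimX: "f \<in> set fs \<Longrightarrow> card (f ` X) = t"
proof -
  assume f: "f \<in> set fs"
  have "inj_on f U" using bij f by (simp add: bij_betw_def)
  then have "inj_on f X" using XU by (rule inj_on_subset)
  then show ?thesis by (simp add: card_image cX)
qed

lemma hA:
  assumes "Z \<subseteq> U" "card Z = 4"
  shows "length (filter (\<lambda>f. f ` X \<subseteq> Z) fs) = card {X'. X' \<subseteq> U \<and> X \<subseteq> X' \<and> card X' = 4} * lam"
proof -
  define I where "I = {X'. X' \<subseteq> U \<and> X \<subseteq> X' \<and> card X' = 4}"
  have fI: "finite I" unfolding I_def using finU by (rule finite_subset[rotated, OF finite_Pow_iff[THEN iffD2]]) auto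
  have "(\<Sum>X'\<in>I. length (filter (\<lambda>f. f ` X' = Z) fs)) = card I * lam"
    using H4 assms unfolding I_def by simp
  moreover have "(\<Sum>X'\<in>I. length (filter (\<lambda>f. f ` X' = Z) fs)) = sum_list (map (\<lambda>f. card {X'\<in>I. f ` X' = Z}) fs)"
    by (rule sum_filter_swap[OF fI])
  moreover have "card {X'\<in>I. f ` X' = Z} = (if f ` X \<subseteq> Z then 1 else 0)" if f: "f \<in> set fs" for f
  proof -
    have b: "bij_betw f U U" using bij f by auto
    have eq: "{X'\<in>I. f ` X' = Z} = {X'. X' \<subseteq> U \<and> (X \<subseteq> X' \<and> card X' = 4) \<and> f ` X' = Z}"
      unfolding I_def by auto
    have inj: "inj_on f U" and im: "f ` U = U" using b by (auto simp: bij_betw_def)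
    have "inj_on (inv_into U f) Z" using assms(1) im by (intro inj_on_inv_into) simp
    then have ci: "card (inv_into U f ` Z) = 4" using assms(2) by (simp add: card_image)
    have fi: "f ` (inv_into U f ` Z) = Z" using assms(1) im by (simp add: image_inv_into_cancel)
    have xi: "(X \<subseteq> inv_into U f ` Z) = (f ` X \<subseteq> Z)"
    proof
      assume "X \<subseteq> inv_into U f ` Z" then show "f ` X \<subseteq> Z"
        using fi by (metis image_mono)
    next
      assume h: "f ` X \<subseteq> Z"
      show "X \<subseteq> inv_into U f ` Z"
      proof
        fix x assume "x \<in> X"
        then have "x \<in> U" "f x \<in> Z" using XU h by auto
        moreover have "inv_into U f (f x) = x" using inv_into_f_f[OF inj] \<open>x \<in> U\<close> by simp
        ultimately show "x \<in> inv_into U f ` Z" by (metis image_eqI)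
      qed
    qed
    show ?thesis unfolding eq preimage_bij[OF b assms(1)] using ci xi by auto
  qed
  then have "sum_list (map (\<lambda>f. card {X'\<in>I. f ` X' = Z}) fs) = sum_list (map (\<lambda>f. if f ` X \<subseteq> Z then 1 else 0) fs)"
    by (intro arg_cong[where f=sum_list] map_cong) auto
  ultimately show ?thesis unfolding I_def by (simp add: sum_list_if_const)
qed

lemma hSum:
  assumes "Z \<subseteq> U"
  shows "(\<Sum>z\<in>Z. length (filter (\<lambda>f. f ` X \<subseteq> Z - {z}) fs)) = (card Z - t) * length (filter (\<lambda>f. f ` X \<subseteq> Z) fs)"
proof -
  have fZ: "finite Z" using assms finU finite_subset by blast
  have "(\<Sum>z\<in>Z. length (filter (\<lambda>f. f ` X \<subseteq> Z - {z}) fs)) = sum_list (map (\<lambda>f. card {z\<in>Z. f ` X \<subseteq> Z - {z}}) fs)"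
    by (rule sum_filter_swap[OF fZ])
  also have "map (\<lambda>f. card {z\<in>Z. f ` X \<subseteq> Z - {z}}) fs = map (\<lambda>f. if f ` X \<subseteq> Z then card Z - t else 0) fs"
  proof (rule map_cong[OF refl])
    fix f assume f: "f \<in> set fs"
    show "card {z\<in>Z. f ` X \<subseteq> Z - {z}} = (if f ` X \<subseteq> Z then card Z - t else 0)"
    proof (cases "f ` X \<subseteq> Z")
      case True
      then have "{z\<in>Z. f ` X \<subseteq> Z - {z}} = Z - f ` X" by auto
      then show ?thesis using True cimX[OF f] fZ by (simp add: card_Diff_subset finite_subset)
    next
      case False
      then have "{z\<in>Z. f ` X \<subseteq> Z - {z}} = {}" by auto
      then show ?thesis using False by (metis card.empty)
    qed
  qed
  finally show ?thesis by (simp add: sum_list_if_const)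
qed

lemma hB:
  assumes "4 \<le> s"
  shows "s \<le> card U \<Longrightarrow> Z \<subseteq> U \<Longrightarrow> Z' \<subseteq> U \<Longrightarrow> card Z = s \<Longrightarrow> card Z' = s \<Longrightarrow>
    length (filter (\<lambda>f. f ` X \<subseteq> Z) fs) = length (filter (\<lambda>f. f ` X \<subseteq> Z') fs)"
  using assms
proof (induction s arbitrary: Z Z' rule: nat_induct_at_least)
  case base
  then show ?case using hA by simp
next
  case (Suc s)
  have fZ: "finite Z" "finite Z'" using Suc finU finite_subset by blast+
  obtain z0 where z0: "z0 \<in> Z'" using Suc(7) by fastforce
  define c where "c = length (filter (\<lambda>f. f ` X \<subseteq> Z' - {z0}) fs)"
  have cz: "card (Z' - {z0}) = s" using Suc z0 by simp
  have e: "length (filter (\<lambda>f. f ` X \<subseteq> W - {z}) fs) = c" if "W \<subseteq> U" "card W = Suc s" "z \<in> W" for W z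
    unfolding c_def
    apply (rule Suc.IH)
    using Suc that cz z0 by auto
  have "(Suc s - t) * length (filter (\<lambda>f. f ` X \<subseteq> Z) fs) = Suc s * c"
    using hSum[of Z] e[of Z] Suc by simp
  moreover have "(Suc s - t) * length (filter (\<lambda>f. f ` X \<subseteq> Z') fs) = Suc s * c"
    using hSum[of Z'] e[of Z'] Suc by simp
  moreover have "Suc s - t > 0" using Suc t4 by simp
  ultimately show ?case by (metis mult_left_cancel not_gr0)
qed

lemma Fsplit:
  assumes "w \<notin> V"
  shows "length (filter (\<lambda>f. W0 \<subseteq> f ` X \<and> f ` X \<inter> V = {}) fs) =
     length (filter (\<lambda>f. insert w W0 \<subseteq> f ` X \<and> f ` X \<inter> V = {}) fs) +
     length (filter (\<lambda>f. W0 \<subseteq> f ` X \<and> f ` X \<inter> insert w V = {}) fs)"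
proof -
  have "length (filter (\<lambda>f. W0 \<subseteq> f ` X \<and> f ` X \<inter> V = {}) fs) =
     length (filter (\<lambda>f. (W0 \<subseteq> f ` X \<and> f ` X \<inter> V = {}) \<and> w \<in> f ` X) fs) +
     length (filter (\<lambda>f. (W0 \<subseteq> f ` X \<and> f ` X \<inter> V = {}) \<and> \<not> w \<in> f ` X) fs)"
    by (rule filter_split_len)
  also have "filter (\<lambda>f. (W0 \<subseteq> f ` X \<and> f ` X \<inter> V = {}) \<and> w \<in> f ` X) fs = filter (\<lambda>f. insert w W0 \<subseteq> f ` X \<and> f ` X \<inter> V = {}) fs"
    by (rule filter_cong) auto
  also have "filter (\<lambda>f. (W0 \<subseteq> f ` X \<and> f ` X \<inter> V = {}) \<and> \<not> w \<in> f ` X) fs = filter (\<lambda>f. W0 \<subseteq> f ` X \<and> f ` X \<inter> insert w V = {}) fs"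
    by (rule filter_cong) auto
  finally show ?thesis .
qed

lemma hC:
  "k + card V + 4 \<le> card U \<Longrightarrow> W \<subseteq> U \<Longrightarrow> V \<subseteq> U \<Longrightarrow> W' \<subseteq> U \<Longrightarrow> V' \<subseteq> U \<Longrightarrow>
   W \<inter> V = {} \<Longrightarrow> W' \<inter> V' = {} \<Longrightarrow> card W = k \<Longrightarrow> card W' = k \<Longrightarrow> card V' = card V \<Longrightarrow>
   length (filter (\<lambda>f. W \<subseteq> f ` X \<and> f ` X \<inter> V = {}) fs) = length (filter (\<lambda>f. W' \<subseteq> f ` X \<and> f ` X \<inter> V' = {}) fs)"
proof (induction k arbitrary: W V W' V')
  case 0
  have fin: "finite W" "finite W'" "finite V" "finite V'" using 0 finU finite_subset by blast+
  then have W: "W = {}" "W' = {}" using 0 by auto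
  have sub: "f ` X \<subseteq> U" if "f \<in> set fs" for f
  proof -
    have "f ` U = U" using bij that by (simp add: bij_betw_def)
    then show ?thesis using XU by blast
  qed
  have r: "length (filter (\<lambda>f. {} \<subseteq> f ` X \<and> f ` X \<inter> V = {}) fs) = length (filter (\<lambda>f. f ` X \<subseteq> U - V) fs)"
    if "V \<subseteq> U" for V
    by (rule arg_cong[where f=length], rule filter_cong) (use sub in auto)
  show ?case unfolding W r[OF 0(3)] r[OF 0(5)]
    apply (rule hB[of "card U - card V"])
    using 0 fin finU by (auto simp: card_Diff_subset)
next
  case (Suc k)
  have fin: "finite W" "finite W'" "finite V" "finite V'" using Suc finU finite_subset by blast+
  obtain w where w: "w \<in> W" using Suc(9) by fastforce
  obtain w' where w': "w' \<in> W'" using Suc(10) by fastforce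
  define W0 where "W0 = W - {w}"
  define W0' where "W0' = W' - {w'}"
  have WW: "W = insert w W0" "W' = insert w' W0'" using w w' W0_def W0'_def by auto
  have nv: "w \<notin> V" "w' \<notin> V'" using w w' Suc by auto
  have c0: "card W0 = k" "card W0' = k" using Suc w w' fin W0_def W0'_def by auto
  have i1: "length (filter (\<lambda>f. W0 \<subseteq> f ` X \<and> f ` X \<inter> V = {}) fs) = length (filter (\<lambda>f. W0' \<subseteq> f ` X \<and> f ` X \<inter> V' = {}) fs)"
    by (rule Suc.IH) (use Suc c0 W0_def W0'_def in auto)
  have i2: "length (filter (\<lambda>f. W0 \<subseteq> f ` X \<and> f ` X \<inter> insert w V = {}) fs) = length (filter (\<lambda>f. W0' \<subseteq> f ` X \<and> f ` X \<inter> insert w' V' = {}) fs)"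
    by (rule Suc.IH) (use Suc c0 W0_def W0'_def fin nv w w' in auto)
  show ?case using Fsplit[OF nv(1), of W0] Fsplit[OF nv(2), of W0'] i1 i2 WW by simp
qed

lemma homog_main:
  assumes "t + 4 \<le> card U" "Y \<subseteq> U" "Y' \<subseteq> U" "card Y = t" "card Y' = t"
  shows "length (filter (\<lambda>f. f ` X = Y) fs) = length (filter (\<lambda>f. f ` X = Y') fs)"
proof -
  have r: "length (filter (\<lambda>f. f ` X = Y) fs) = length (filter (\<lambda>f. Y \<subseteq> f ` X \<and> f ` X \<inter> {} = {}) fs)"
    if "card Y = t" "Y \<subseteq> U" for Y
  proof (rule arg_cong[where f=length], rule filter_cong[OF refl])
    fix f assume f: "f \<in> set fs"
    have fin: "finite (f ` X)" using XU finU finite_subset by blast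
    show "(f ` X = Y) = (Y \<subseteq> f ` X \<and> f ` X \<inter> {} = {})"
      using card_subset_eq[OF fin] cimX[OF f] that by auto
  qed
  show ?thesis unfolding r[OF assms(4,2)] r[OF assms(5,3)]
    by (rule hC) (use assms in auto)
qed

end



lemma steiner_bij:
  assumes b: "bij_betw p Q Q" and st: "steiner_system t k Q Bl"
  shows "steiner_system t k Q ((`) p ` Bl)"
proof -
  have inj: "inj_on p Q" and im: "p ` Q = Q" using b by (auto simp: bij_betw_def)
  have blk: "\<forall>K\<in>Bl. K \<subseteq> Q \<and> card K = k" and uq: "\<forall>T. T \<subseteq> Q \<and> card T = t \<longrightarrow> (\<exists>!K. K \<in> Bl \<and> T \<subseteq> K)"
    using st unfolding steiner_system_def by auto
  have 1: "\<forall>K\<in>(`) p ` Bl. K \<subseteq> Q \<and> card K = k"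
  proof
    fix K assume "K \<in> (`) p ` Bl"
    then obtain D where D: "D \<in> Bl" "K = p ` D" by auto
    have "D \<subseteq> Q" "card D = k" using blk D by auto
    then show "K \<subseteq> Q \<and> card K = k" using im D(2) card_image[OF inj_on_subset[OF inj]] by auto
  qed
  have 2: "\<exists>!K. K \<in> (`) p ` Bl \<and> T \<subseteq> K" if T: "T \<subseteq> Q" "card T = t" for T
  proof -
    define T' where "T' = inv_into Q p ` T"
    have T'Q: "T' \<subseteq> Q"
    proof
      fix y assume "y \<in> T'"
      then obtain z where z: "z \<in> T" "y = inv_into Q p z" unfolding T'_def by blast
      then have "z \<in> p ` Q" using T im by blast
      then show "y \<in> Q" using z(2) by (simp add: inv_into_into)
    qed
    have pT': "p ` T' = T" unfolding T'_def using T im by (simp add: image_inv_into_cancel)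
    have cT': "card T' = t" using T inj_on_inv_into[of T p Q] im unfolding T'_def
      by (simp add: card_image)
    have "\<exists>!K. K \<in> Bl \<and> T' \<subseteq> K" using uq T'Q cT' by blast
    then obtain D where D: "D \<in> Bl" "T' \<subseteq> D" and Du: "\<And>D'. D' \<in> Bl \<Longrightarrow> T' \<subseteq> D' \<Longrightarrow> D' = D"
      by blast
    have bk: "T' \<subseteq> E" if "E \<in> Bl" "T \<subseteq> p ` E" for E
    proof
      fix x assume x: "x \<in> T'"
      then have xQ: "x \<in> Q" using T'Q by auto
      have "p x \<in> p ` E" using pT' x that by auto
      then obtain y where "y \<in> E" "p y = p x" by auto
      moreover have "y \<in> Q" using blk that \<open>y \<in> E\<close> by auto
      ultimately show "x \<in> E" using inj xQ by (metis inj_onD)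
    qed
    show ?thesis
    proof (rule ex1I[of _ "p ` D"])
      show "p ` D \<in> (`) p ` Bl \<and> T \<subseteq> p ` D" using D pT' by auto
    next
      fix K assume K: "K \<in> (`) p ` Bl \<and> T \<subseteq> K"
      then obtain D' where "D' \<in> Bl" "K = p ` D'" by auto
      then show "K = p ` D" using bk[of D'] Du[of D'] K by simp
    qed
  qed
  have two: "\<forall>T. T \<subseteq> Q \<and> card T = t \<longrightarrow> (\<exists>!K. K \<in> (`) p ` Bl \<and> T \<subseteq> K)"
    using 2 by simp
  show ?thesis unfolding steiner_system_def using 1 two by (rule conjI)
qed

lemma steiner_card1:
  assumes st: "steiner_system 3 4 Q Bl" and T: "T \<subseteq> Q" "card T = 3"
  shows "card {x\<in>Q - T. insert x T \<in> Bl} = 1"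
proof -
  have blk: "\<forall>K\<in>Bl. K \<subseteq> Q \<and> card K = 4" and uq: "\<exists>!K. K \<in> Bl \<and> T \<subseteq> K"
    using st T unfolding steiner_system_def by auto
  then obtain K where K: "K \<in> Bl" "T \<subseteq> K" and Ku: "\<And>K'. K' \<in> Bl \<Longrightarrow> T \<subseteq> K' \<Longrightarrow> K' = K" by blast
  have fT: "finite T" using T by (metis card.infinite zero_neq_numeral)
  have fK: "finite K" "card K = 4" "K \<subseteq> Q" using blk K by (auto intro: card_ge_0_finite)
  have "card (K - T) = 1" using fK K T fT by (simp add: card_Diff_subset)
  then obtain x where x: "K - T = {x}" by (meson card_1_singletonE)
  have KK: "K = insert x T" using x K by auto
  have "{x\<in>Q - T. insert x T \<in> Bl} = {x}"
  proof
    show "{x} \<subseteq> {x\<in>Q - T. insert x T \<in> Bl}" using x KK K fK by auto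
  next
    show "{x\<in>Q - T. insert x T \<in> Bl} \<subseteq> {x}"
    proof
      fix y assume "y \<in> {x\<in>Q - T. insert x T \<in> Bl}"
      then have "y \<notin> T" "insert y T = K" using Ku by auto
      then show "y \<in> {x}" using x by auto
    qed
  qed
  then show ?thesis by simp
qed

lemma image_split:
  assumes "A \<inter> B = {}" "\<forall>x. x \<notin> B \<longrightarrow> p x = x" "p ` B \<subseteq> B"
    and "D \<subseteq> A \<union> B" "K \<subseteq> A \<union> B"
  shows "(p ` D = K) = (D \<inter> A = K \<inter> A \<and> p ` (D \<inter> B) = K \<inter> B)"
proof -
  have D: "p ` D = (D \<inter> A) \<union> p ` (D \<inter> B)"
  proof -
    have "D = (D \<inter> A) \<union> (D \<inter> B)" using assms by auto
    then have "p ` D = p ` (D \<inter> A) \<union> p ` (D \<inter> B)" by (metis image_Un)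
    moreover have "p ` (D \<inter> A) = D \<inter> A"
    proof -
      have "\<forall>x\<in>D \<inter> A. p x = x" using assms(1,2) by blast
      then show ?thesis by simp
    qed
    ultimately show ?thesis by simp
  qed
  have s: "p ` (D \<inter> B) \<subseteq> B" using assms(3) by auto
  show ?thesis
  proof
    assume h: "p ` D = K"
    have "K \<inter> A = D \<inter> A" unfolding h[symmetric] D using s assms(1) by blast
    moreover have "K \<inter> B = p ` (D \<inter> B)" unfolding h[symmetric] D using s assms(1) by blast
    ultimately show "D \<inter> A = K \<inter> A \<and> p ` (D \<inter> B) = K \<inter> B" by simp
  next
    assume "D \<inter> A = K \<inter> A \<and> p ` (D \<inter> B) = K \<inter> B"
    then show "p ` D = K" unfolding D using assms(5) by auto
  qed
qed



lemma count_lemma: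
  fixes c :: "'a set \<Rightarrow> nat"
  assumes fA: "finite A" and cA: "card A = 3" and AB: "A \<inter> B = {}" and fB: "finite B" and cB: "card B = m"
    and m3: "3 < m"
    and F1: "\<And>K K'. K \<subseteq> A \<union> B \<Longrightarrow> K' \<subseteq> A \<union> B \<Longrightarrow> card K = 4 \<Longrightarrow> card K' = 4 \<Longrightarrow> K \<inter> A = K' \<inter> A \<Longrightarrow> c K = c K'"
    and F2: "\<And>T. T \<subseteq> A \<union> B \<Longrightarrow> card T = 3 \<Longrightarrow> (\<Sum>x\<in>(A \<union> B) - T. c (insert x T)) = N"
  shows "K \<subseteq> A \<union> B \<Longrightarrow> card K = 4 \<Longrightarrow> m * c K = N"
proof (induction "3 - card (K \<inter> A)" arbitrary: K rule: less_induct)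
  case less
  have fK: "finite K" using less(3) by (metis card.infinite zero_neq_numeral)
  define j where "j = card (K \<inter> A)"
  have j3: "j \<le> 3" unfolding j_def using cA fA by (metis Int_lower2 card_mono)
  have "K \<inter> B \<noteq> {}"
  proof
    assume "K \<inter> B = {}"
    then have "K \<subseteq> A" using less(2) by auto
    then have "card K \<le> 3" using cA fA card_mono by metis
    then show False using less(3) by simp
  qed
  then obtain b where b: "b \<in> K" "b \<in> B" by auto
  have bA: "b \<notin> A" using b AB by auto
  define T where "T = K - {b}"
  have TQ: "T \<subseteq> A \<union> B" using less(2) T_def by auto
  have cT: "card T = 3" using less(3) b fK T_def by simp
  have fT: "finite T" using fK T_def by simp
  have TA: "T \<inter> A = K \<inter> A" using bA T_def by auto
  have split: "(A \<union> B) - T = (A - K) \<union> (B - T)" using T_def bA by auto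
  have disj: "(A - K) \<inter> (B - T) = {}" using AB by auto
  have cAK: "card (A - K) = 3 - j" unfolding j_def using fA cA
    by (metis Int_commute card_Diff_subset_Int finite_Int Int_lower2 card_Diff_subset) 
  have cTB: "card (T \<inter> B) = 3 - j"
  proof -
    have "T = (T \<inter> A) \<union> (T \<inter> B)" using TQ by auto
    then have "card T = card (T \<inter> A) + card (T \<inter> B)" using fT AB
      by (metis card_Un_disjoint finite_Int inf_assoc inf_bot_right inf_left_commute)
    then show ?thesis using cT TA j_def by simp
  qed
  have cBT: "card (B - T) = m - (3 - j)" using cTB cB fB
    by (metis Int_commute card_Diff_subset_Int finite_Int)
  have e1: "c (insert x T) = c K" if "x \<in> B - T" for x
    apply (rule F1) using that less(2,3) TQ cT fT TA bA AB T_def b by (auto simp: insert_absorb)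
  have e2: "m * c (insert x T) = N" if x: "x \<in> A - K" for x
  proof (rule less.hyps)
    have "insert x T \<inter> A = insert x (K \<inter> A)" using x TA by auto
    moreover have "x \<notin> K \<inter> A" using x by auto
    ultimately have "card (insert x T \<inter> A) = Suc j" unfolding j_def using fK by simp
    moreover have "j < 3"
    proof -
      have "K \<inter> A \<subset> A" using x by auto
      then show ?thesis unfolding j_def using fA cA psubset_card_mono by metis
    qed
    ultimately show "3 - card (insert x T \<inter> A) < 3 - card (K \<inter> A)" unfolding j_def by simp
    show "insert x T \<subseteq> A \<union> B" using x TQ by auto
    show "card (insert x T) = 4" using x cT fT T_def by simp
  qed
  define S1 where "S1 = (\<Sum>x\<in>A - K. c (insert x T))"
  have eq1: "S1 + (m - (3 - j)) * c K = N"
  proof -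
    have "N = (\<Sum>x\<in>(A - K) \<union> (B - T). c (insert x T))" using F2[OF TQ cT] split by simp
    also have "\<dots> = S1 + (\<Sum>x\<in>B - T. c (insert x T))" unfolding S1_def
      using disj fA fB by (simp add: sum.union_disjoint)
    also have "(\<Sum>x\<in>B - T. c (insert x T)) = (m - (3 - j)) * c K" using e1 cBT by simp
    finally show ?thesis by simp
  qed
  have eq2: "m * S1 = (3 - j) * N"
    unfolding S1_def using e2 cAK by (simp add: sum_distrib_left)
  define e where "e = 3 - j"
  have em: "e < m" using m3 e_def by simp
  have "(m - e) * (m * c K) = (m - e) * N"
  proof -
    have "m * N = m * S1 + m * ((m - e) * c K)" using eq1 e_def by (metis add_mult_distrib2)
    also have "\<dots> = e * N + (m - e) * (m * c K)" using eq2 e_def by simp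
    finally have a: "m * N = e * N + (m - e) * (m * c K)" .
    have b: "m * N = e * N + (m - e) * N" using em by (metis add_mult_distrib le_add_diff_inverse less_imp_le)
    from a b show ?thesis by linarith
  qed
  then show ?case using em by simp
qed



lemma bij_extend:
  assumes "bij_betw p B B" "\<forall>x. x \<notin> B \<longrightarrow> p x = x" "B \<subseteq> Q"
  shows "bij_betw p Q Q"
proof -
  have inj: "inj_on p B" and im: "p ` B = B" using assms(1) by (auto simp: bij_betw_def)
  have "inj_on p Q"
  proof (rule inj_onI)
    fix x y assume xy: "x \<in> Q" "y \<in> Q" "p x = p y"
    show "x = y"
    proof (cases "x \<in> B")
      case True
      then have px: "p x \<in> B" using im by blast
      show ?thesis
      proof (cases "y \<in> B")
        case True
        then show ?thesis using \<open>x \<in> B\<close> xy(3) inj by (simp add: inj_on_eq_iff)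
      next
        case False
        then have "p y = y" using assms(2) by simp
        then show ?thesis using px xy(3) False by simp
      qed
    next
      case False
      then have px: "p x = x" using assms(2) by simp
      show ?thesis
      proof (cases "y \<in> B")
        case True
        then have "p y \<in> B" using im by blast
        then show ?thesis using px xy(3) False by simp
      next
        case False
        then show ?thesis using px xy(3) assms(2) by simp
      qed
    qed
  qed
  moreover have "p ` Q = Q"
  proof -
    have e: "Q = B \<union> (Q - B)" using assms(3) by blast
    have "p ` (Q - B) = Q - B" using assms(2) by simp
    moreover have "p ` Q = p ` B \<union> p ` (Q - B)" by (subst e) (rule image_Un)
    ultimately show ?thesis using im e by simp
  qed
  ultimately show ?thesis by (simp add: bij_betw_def)
qed

lemma card_pre_inj:
  assumes "inj_on g S"
  shows "card {D\<in>S. g D = K} = (if K \<in> g ` S then 1 else 0)"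
proof (cases "K \<in> g ` S")
  case True
  then obtain D0 where D0: "D0 \<in> S" "g D0 = K" by blast
  have "{D\<in>S. g D = K} = {D0}"
  proof
    show "{D\<in>S. g D = K} \<subseteq> {D0}"
    proof
      fix D assume "D \<in> {D\<in>S. g D = K}"
      then have "D \<in> S" "g D = g D0" using D0 by auto
      then show "D \<in> {D0}" using assms D0(1) by (simp add: inj_on_eq_iff)
    qed
    show "{D0} \<subseteq> {D\<in>S. g D = K}" using D0 by simp
  qed
  then show ?thesis using True by simp
next
  case False
  then have "{D\<in>S. g D = K} = {}" by blast
  then show ?thesis using False by (metis card.empty)
qed

lemma card_split:
  assumes "finite D" "D \<subseteq> A \<union> B" "A \<inter> B = {}"
  shows "card D = card (D \<inter> A) + card (D \<inter> B)"
proof -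
  have "D = (D \<inter> A) \<union> (D \<inter> B)" using assms(2) by blast
  moreover have "(D \<inter> A) \<inter> (D \<inter> B) = {}" using assms(3) by blast
  moreover have "finite (D \<inter> A)" "finite (D \<inter> B)" using assms(1) by auto
  ultimately show ?thesis using card_Un_disjoint[of "D \<inter> A" "D \<inter> B"] by simp
qed

lemma perm_row:
  assumes "length r = m" "distinct r" "set r \<subseteq> {0..<m}"
  shows "bij_betw ((!) r) {0..<m} {0..<m}" "set r = {0..<m}"
proof -
  have "card (set r) = m" using assms(1) distinct_card[OF assms(2)] by simp
  then show sr: "set r = {0..<m}" using assms(3) by (simp add: card_subset_eq)
  show "bij_betw ((!) r) {0..<m} {0..<m}"
    by (rule bij_betw_nth) (simp_all add: assms(1,2) sr atLeast0LessThan)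
qed


theorem theorem19:
  fixes n lam :: nat and S :: "nat set set" and A B :: "nat set"
  assumes "n \<ge> 14"
    and "steiner_system 3 4 {0..<n} S"
    and "A \<union> B = {0..<n}" and "A \<inter> B = {}" and "card A = 3" and "card B = n - 3"
    and "\<exists>M. perp_array lam 4 (n - 3) (n - 3) M"
  shows "\<exists>Ls. large_set 3 4 {0..<n} (lam * ((n - 4) choose 3) div 4) Ls"
proof -
  obtain M where PA: "perp_array lam 4 (n - 3) (n - 3) M" using assms(7) by blast
  define m where "m = n - 3"
  define Q where "Q = {0..<n}"
  have m11: "11 \<le> m" using assms(1) m_def by simp
  have QAB: "A \<union> B = Q" using assms(3) Q_def by simp
  have finQ: "finite Q" using Q_def by simp
  have AQ: "A \<subseteq> Q" and BQ: "B \<subseteq> Q" using QAB by blast+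
  have finA: "finite A" using finite_subset[OF AQ finQ] .
  have finB: "finite B" using finite_subset[OF BQ finQ] .
  have cB: "card B = m" using assms(6) m_def by simp
  have AB: "A \<inter> B = {}" by (rule assms(4))
  obtain \<phi> where phi0: "bij_betw \<phi> {0..<card B} B" using ex_bij_betw_nat_finite[OF finB] by blast
  have phi: "bij_betw \<phi> {0..<m} B" using phi0 cB by simp
  define \<psi> where "\<psi> = inv_into {0..<m} \<phi>"
  have psi: "bij_betw \<psi> B {0..<m}" using bij_betw_inv_into[OF phi] \<psi>_def by simp
  have phiinj: "inj_on \<phi> {0..<m}" and phiim: "\<phi> ` {0..<m} = B" using phi by (auto simp: bij_betw_def)
  have psiinj: "inj_on \<psi> B" and psiim: "\<psi> ` B = {0..<m}" using psi by (auto simp: bij_betw_def)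
  have PAlen: "length M = lam * (m choose 4)"
    and PArow: "\<forall>r\<in>set M. length r = m \<and> distinct r \<and> set r \<subseteq> {0..<m}"
    and PAcnt: "\<forall>C K. C \<subseteq> {0..<m} \<and> card C = 4 \<and> K \<subseteq> {0..<m} \<and> card K = 4 \<longrightarrow>
        length (filter (\<lambda>r. (\<lambda>c. r ! c) ` C = K) M) = lam"
    using PA unfolding perp_array_def m_def by auto
  define \<pi> where "\<pi> = (\<lambda>r x. if x \<in> B then \<phi> (r ! \<psi> x) else x)"
  define fs where "fs = map \<pi> M"
  have rowbij: "bij_betw ((!) r) {0..<m} {0..<m}" if "r \<in> set M" for r
    using perm_row(1) PArow that by blast
  have piB: "bij_betw (\<pi> r) B B" if "r \<in> set M" for r
  proof -
    have "bij_betw (\<phi> \<circ> ((!) r \<circ> \<psi>)) B B"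
      by (rule bij_betw_trans[OF bij_betw_trans[OF psi rowbij[OF that]] phi])
    moreover have "\<And>x. x \<in> B \<Longrightarrow> (\<phi> \<circ> ((!) r \<circ> \<psi>)) x = \<pi> r x" unfolding \<pi>_def by simp
    ultimately show ?thesis using bij_betw_cong by blast
  qed
  have piid: "\<forall>x. x \<notin> B \<longrightarrow> \<pi> r x = x" for r unfolding \<pi>_def by simp
  have piQ: "bij_betw (\<pi> r) Q Q" if "r \<in> set M" for r using bij_extend[OF piB[OF that] piid BQ] .
  have fsB: "\<forall>f\<in>set fs. bij_betw f B B" unfolding fs_def using piB by auto
  have fsid: "\<forall>x. x \<notin> B \<longrightarrow> f x = x" if "f \<in> set fs" for f using that unfolding fs_def using piid by auto
  have fsQ: "\<forall>f\<in>set fs. bij_betw f Q Q" unfolding fs_def using piQ by auto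
  have fsim: "f ` B \<subseteq> B" if "f \<in> set fs" for f using fsB that by (simp add: bij_betw_def)
  have H4: "\<forall>X Y. X \<subseteq> B \<and> Y \<subseteq> B \<and> card X = 4 \<and> card Y = 4 \<longrightarrow> length (filter (\<lambda>f. f ` X = Y) fs) = lam"
  proof (intro allI impI)
    fix X Y assume XY: "X \<subseteq> B \<and> Y \<subseteq> B \<and> card X = 4 \<and> card Y = 4"
    have psX: "\<psi> ` X \<subseteq> {0..<m}" "\<psi> ` Y \<subseteq> {0..<m}" using XY psiim by blast+
    have eq: "(\<pi> r ` X = Y) = ((\<lambda>c. r ! c) ` (\<psi> ` X) = \<psi> ` Y)" if r: "r \<in> set M" for r
    proof -
      have "\<pi> r ` X = (\<phi> \<circ> ((!) r \<circ> \<psi>)) ` X"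
        by (rule image_cong[OF refl]) (use XY in \<open>auto simp: \<pi>_def\<close>)
      then have im: "\<pi> r ` X = \<phi> ` ((\<lambda>c. r ! c) ` (\<psi> ` X))" by (simp add: image_comp)
      have Psub: "(\<lambda>c. r ! c) ` (\<psi> ` X) \<subseteq> {0..<m}"
        using psX(1) rowbij[OF r] by (auto simp: bij_betw_def)
      show ?thesis
      proof
        assume h: "\<pi> r ` X = Y"
        have "\<psi> ` (\<phi> ` ((\<lambda>c. r ! c) ` (\<psi> ` X))) = (\<lambda>c. r ! c) ` (\<psi> ` X)"
          using inv_into_image_cancel[OF phiinj Psub] \<psi>_def by simp
        then show "(\<lambda>c. r ! c) ` (\<psi> ` X) = \<psi> ` Y" using h im by simp
      next
        assume h: "(\<lambda>c. r ! c) ` (\<psi> ` X) = \<psi> ` Y"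
        have "\<phi> ` (\<psi> ` Y) = Y" unfolding \<psi>_def using XY phiim by (simp add: image_inv_into_cancel)
        then show "\<pi> r ` X = Y" using h im by simp
      qed
    qed
    have "length (filter (\<lambda>f. f ` X = Y) fs) = length (filter (\<lambda>r. \<pi> r ` X = Y) M)"
      unfolding fs_def by (simp add: comp_def)
    also have "\<dots> = length (filter (\<lambda>r. (\<lambda>c. r ! c) ` (\<psi> ` X) = \<psi> ` Y) M)"
      by (rule arg_cong[where f=length], rule filter_cong[OF refl]) (rule eq)
    also have "\<dots> = lam"
    proof -
      have "card (\<psi> ` X) = 4" using XY psiinj by (metis card_image inj_on_subset)
      moreover have "card (\<psi> ` Y) = 4" using XY psiinj by (metis card_image inj_on_subset)
      ultimately show ?thesis using PAcnt psX by blast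
    qed
    finally show "length (filter (\<lambda>f. f ` X = Y) fs) = lam" .
  qed
  have HOM: "length (filter (\<lambda>f. f ` X = Y) fs) = length (filter (\<lambda>f. f ` X = Y') fs)"
    if "X \<subseteq> B" "Y \<subseteq> B" "Y' \<subseteq> B" "card Y = card X" "card Y' = card X" "card X \<le> 4" for X Y Y'
    by (rule homog_main[OF finB fsB H4 that(1) refl that(6)]) (use that cB m11 in auto)
  define c where "c K = length (filter (\<lambda>p. K \<in> (`) p ` S) fs)" for K
  have stS: "steiner_system 3 4 Q S" using assms(2) Q_def by simp
  have Sblk: "\<forall>K\<in>S. K \<subseteq> Q \<and> card K = 4" using stS unfolding steiner_system_def by simp
  have SP: "S \<subseteq> Pow Q" using Sblk by blast
  have finS: "finite S" using finite_subset[OF SP] finQ by simp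
  have stP: "steiner_system 3 4 Q ((`) p ` S)" if "p \<in> set fs" for p
    using steiner_bij[OF _ stS] fsQ that by blast
  have csum: "c K = (\<Sum>D\<in>S. length (filter (\<lambda>p. p ` D = K) fs))" for K
  proof -
    have "(\<Sum>D\<in>S. length (filter (\<lambda>p. p ` D = K) fs)) = sum_list (map (\<lambda>p. card {D\<in>S. p ` D = K}) fs)"
      by (rule sum_filter_swap[OF finS])
    also have "map (\<lambda>p. card {D\<in>S. p ` D = K}) fs = map (\<lambda>p. if K \<in> (`) p ` S then 1 else 0) fs"
    proof (rule map_cong[OF refl])
      fix p assume p: "p \<in> set fs"
      have "inj_on p Q" using fsQ p by (simp add: bij_betw_def)
      then have "inj_on ((`) p) (Pow Q)" by (rule inj_on_image_Pow)
      then have "inj_on ((`) p) S" using SP by (rule inj_on_subset)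
      then show "card {D\<in>S. p ` D = K} = (if K \<in> (`) p ` S then 1 else 0)" by (rule card_pre_inj)
    qed
    finally show ?thesis unfolding c_def by (simp add: sum_list_if_const)
  qed
  have F1: "c K = c K'" if KK: "K \<subseteq> A \<union> B" "K' \<subseteq> A \<union> B" "card K = 4" "card K' = 4" "K \<inter> A = K' \<inter> A" for K K'
  proof -
    have "length (filter (\<lambda>p. p ` D = K) fs) = length (filter (\<lambda>p. p ` D = K') fs)" if D: "D \<in> S" for D
    proof -
      have DQ: "D \<subseteq> A \<union> B" "card D = 4" using Sblk D QAB by auto
      have spl: "(p ` D = L) = (D \<inter> A = L \<inter> A \<and> p ` (D \<inter> B) = L \<inter> B)" if "p \<in> set fs" "L \<subseteq> A \<union> B" for p L
        by (rule image_split[OF AB fsid[OF that(1)] fsim[OF that(1)] DQ(1) that(2)])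
      have e1: "filter (\<lambda>p. p ` D = K) fs = filter (\<lambda>p. D \<inter> A = K \<inter> A \<and> p ` (D \<inter> B) = K \<inter> B) fs"
        by (rule filter_cong[OF refl]) (rule spl[OF _ KK(1)])
      have e2: "filter (\<lambda>p. p ` D = K') fs = filter (\<lambda>p. D \<inter> A = K \<inter> A \<and> p ` (D \<inter> B) = K' \<inter> B) fs"
        unfolding KK(5) by (rule filter_cong[OF refl]) (rule spl[OF _ KK(2)])
      show ?thesis
      proof (cases "D \<inter> A = K \<inter> A")
        case False
        then show ?thesis unfolding e1 e2 by simp
      next
        case True
        have fD: "finite D" "finite K" "finite K'" using DQ(2) KK(3,4) by (auto intro: card_ge_0_finite)
        have cD: "card D = card (D \<inter> A) + card (D \<inter> B)" by (rule card_split[OF fD(1) DQ(1) AB])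
        have cK: "card K = card (K \<inter> A) + card (K \<inter> B)" by (rule card_split[OF fD(2) KK(1) AB])
        have cK': "card K' = card (K' \<inter> A) + card (K' \<inter> B)" by (rule card_split[OF fD(3) KK(2) AB])
        have "length (filter (\<lambda>f. f ` (D \<inter> B) = K \<inter> B) fs) = length (filter (\<lambda>f. f ` (D \<inter> B) = K' \<inter> B) fs)"
          by (rule HOM) (use cD cK cK' True KK DQ in auto)
        then show ?thesis unfolding e1 e2 using True by simp
      qed
    qed
    then show ?thesis unfolding csum by (rule sum.cong[OF refl])
  qed
  have F2: "(\<Sum>x\<in>(A \<union> B) - T. c (insert x T)) = length fs" if T: "T \<subseteq> A \<union> B" "card T = 3" for T
  proof -
    have fin: "finite ((A \<union> B) - T)" using finA finB by simp
    have "(\<Sum>x\<in>(A \<union> B) - T. c (insert x T)) = sum_list (map (\<lambda>p. card {x\<in>(A \<union> B) - T. insert x T \<in> (`) p ` S}) fs)"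
      unfolding c_def by (rule sum_filter_swap[OF fin])
    also have "map (\<lambda>p. card {x\<in>(A \<union> B) - T. insert x T \<in> (`) p ` S}) fs = map (\<lambda>p. 1) fs"
    proof (rule map_cong[OF refl])
      fix p assume p: "p \<in> set fs"
      show "card {x\<in>(A \<union> B) - T. insert x T \<in> (`) p ` S} = 1"
        using steiner_card1[OF stP[OF p]] T QAB by simp
    qed
    finally show ?thesis by (simp add: sum_list_const_nat)
  qed
  have count: "m * c K = length fs" if "K \<subseteq> A \<union> B" "card K = 4" for K
    by (rule count_lemma[OF finA assms(5) AB finB cB _ F1 F2 that]) (use m11 in simp)
  define Ls where "Ls = map (\<lambda>p. (`) p ` S) fs"
  have LsS: "\<forall>D\<in>set Ls. steiner_system 3 4 {0..<n} D"
    unfolding Ls_def using stP Q_def by auto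
  have LsC: "length (filter (\<lambda>D. K \<in> D) Ls) = lam * ((n - 4) choose 3) div 4"
    if K: "K \<subseteq> {0..<n}" "card K = 4" for K
  proof -
    have l: "length (filter (\<lambda>D. K \<in> D) Ls) = c K" unfolding Ls_def c_def by (simp add: comp_def)
    have mc: "m * c K = lam * (m choose 4)" using count[of K] K QAB Q_def PAlen fs_def by simp
    have n4: "n - 4 = m - 1" using m_def by simp
    have bin: "m * ((m - 1) choose 3) = (m choose 4) * 4"
      using Suc_times_binomial_eq[of "m - 1" 3] m11 by simp
    have "m * (4 * c K) = m * (lam * ((m - 1) choose 3))"
      using mc bin by (metis mult.assoc mult.commute mult.left_commute)
    then have "4 * c K = lam * ((m - 1) choose 3)" using m11 by simp
    then show ?thesis unfolding l n4 by simp
  qed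
  show ?thesis unfolding large_set_def using LsS LsC by blast
qed

end
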